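(* Let $d\ge 1$, $\sigma>0$, $a>0$, $\vartheta\in[0,1)$ and let $\tau\ge 1$ be an integer. Let $u_1,\dots,u_\tau$ be independent random vectors with $u_k\sim N(0,\sigma^2 I_d)$, and set $v_k=a\,u_k$ (the noise added at the $k$-th iteration of a stepwise interval of length $\tau$ during which the noise factor $a$ is constant). Define the progressively fused noise recursively by $\tilde N_1=v_1$ and $\tilde N_k=(1-\vartheta)v_k+\vartheta\tilde N_{k-1}$ for $k=2,\dots,\tau$. Then $$\mathbb{E}\big[\|\tilde N_\tau\|^2\big]=\Big(\frac{1-\vartheta}{1+\vartheta}+\frac{2}{1+\vartheta}\vartheta^{2\tau-1}\Big)\,\mathbb{E}\big[\|v_1\|^2\big].$$
   Context: This describes the noise component of the progressive gradient fusion (PGF) update $\tilde g_i^t=(1-\vartheta)\bar g_i^t+\vartheta\tilde g_i^{t-1}$, which is applied while the noise factor stays constant and restarted ($\tilde g$ set to the current noisy gradient) at the beginning of each interval of length $\tau$; each noisy gradient carries independent Gaussian noise of the same scale within the interval. $\|\cdot\|$ is the Euclidean norm. *)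

theory Defs
  imports "HOL-Probability.Probability"
begin

text \<open>Progressively fused noise: N_1 = v_1, N_k = (1 - th) v_k + th N_{k-1} for k >= 2.
  The value at index 0 is an irrelevant junk value.\<close>
fun pgf_noise :: "real \<Rightarrow> (nat \<Rightarrow> 'a \<Rightarrow> 'b::real_vector) \<Rightarrow> nat \<Rightarrow> 'a \<Rightarrow> 'b" where
  "pgf_noise th v 0 = (\<lambda>x. 0)"
| "pgf_noise th v (Suc 0) = v 1"
| "pgf_noise th v (Suc (Suc k)) =
     (\<lambda>x. (1 - th) *\<^sub>R v (Suc (Suc k)) x + th *\<^sub>R pgf_noise th v (Suc k) x)"

end

theory Submission
  imports Defs
begin

definition coef :: "real \<Rightarrow> nat \<Rightarrow> nat \<Rightarrow> real" where
  "coef th n k = (if k = 1 then th^(n-1) else (1-th)*th^(n-k))"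

lemma coef_step: "k \<in> {1..Suc m} \<Longrightarrow> coef th (Suc (Suc m)) k = th * coef th (Suc m) k"
  by (auto simp: coef_def Suc_diff_le)

lemma pgf_repr:
  fixes u :: "nat \<Rightarrow> 'a \<Rightarrow> 'b::real_vector"
  shows "pgf_noise th (\<lambda>k x. a *\<^sub>R u k x) (Suc m) x = (\<Sum>k\<in>{1..Suc m}. (a * coef th (Suc m) k) *\<^sub>R u k x)"
proof (induction m)
  case 0
  then show ?case by (simp add: coef_def)
next
  case (Suc m)
  have "(\<Sum>k\<in>{1..Suc (Suc m)}. (a * coef th (Suc (Suc m)) k) *\<^sub>R u k x)
      = (a * coef th (Suc (Suc m)) (Suc (Suc m))) *\<^sub>R u (Suc (Suc m)) x
        + (\<Sum>k\<in>{1..Suc m}. (a * coef th (Suc (Suc m)) k) *\<^sub>R u k x)"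
    by (simp add: add.commute)
  also have "(\<Sum>k\<in>{1..Suc m}. (a * coef th (Suc (Suc m)) k) *\<^sub>R u k x)
     = th *\<^sub>R (\<Sum>k\<in>{1..Suc m}. (a * coef th (Suc m) k) *\<^sub>R u k x)"
  proof -
    have "(\<Sum>k\<in>{1..Suc m}. (a * coef th (Suc (Suc m)) k) *\<^sub>R u k x)
       = (\<Sum>k\<in>{1..Suc m}. th *\<^sub>R ((a * coef th (Suc m) k) *\<^sub>R u k x))"
      by (rule sum.cong) (simp_all add: coef_step)
    then show ?thesis by (simp only: scaleR_sum_right)
  qed
  finally show ?case using Suc by (simp add: coef_def)
qed

definition F :: "real \<Rightarrow> nat \<Rightarrow> real" where
  "F th n = (1 - th) / (1 + th) + 2 / (1 + th) * th ^ (2 * n - 1)"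

lemma coef_sq:
  assumes "0 \<le> th"
  shows "(\<Sum>k\<in>{1..Suc m}. (coef th (Suc m) k)^2) = F th (Suc m)"
proof (induction m)
  case 0
  have "1 + th \<noteq> 0" "1 + (th * th + th * 2) \<noteq> 0" using assms by (simp, smt (verit) mult_nonneg_nonneg)
  then show ?case by (simp add: coef_def F_def field_simps)
next
  case (Suc m)
  have "(\<Sum>k\<in>{1..Suc (Suc m)}. (coef th (Suc (Suc m)) k)^2)
      = (coef th (Suc (Suc m)) (Suc (Suc m)))^2 + (\<Sum>k\<in>{1..Suc m}. (coef th (Suc (Suc m)) k)^2)"
    by (simp add: add.commute)
  also have "(\<Sum>k\<in>{1..Suc m}. (coef th (Suc (Suc m)) k)^2) = th^2 * (\<Sum>k\<in>{1..Suc m}. (coef th (Suc m) k)^2)"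
    unfolding sum_distrib_left by (rule sum.cong) (simp_all add: coef_step power_mult_distrib)
  also have "(coef th (Suc (Suc m)) (Suc (Suc m)))^2 = (1 - th)^2" by (simp add: coef_def)
  finally have e: "(\<Sum>k\<in>{1..Suc (Suc m)}. (coef th (Suc (Suc m)) k)^2) = (1-th)^2 + th^2 * F th (Suc m)"
    using Suc by simp
  have ne: "1 + th \<noteq> 0" using assms by simp
  have p: "th ^ (2 * Suc (Suc m) - 1) = th^2 * th ^ (2 * Suc m - 1)"
    by (simp add: power_add[symmetric])
  have g: "(1-th)^2 + th^2 * ((1 - th) / (1 + th) + 2 / (1 + th) * t)
     = (1 - th) / (1 + th) + 2 / (1 + th) * (th^2 * t)" for t
  proof -
    have ne2: "1 + (th * th + th * 2) \<noteq> 0" using assms by (smt (verit) mult_nonneg_nonneg)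
    show ?thesis using ne ne2 by (simp add: field_simps) (simp add: algebra_simps power2_eq_square)
  qed
  show ?case unfolding e F_def p by (rule g)
qed

lemma (in prob_space) indep_pair:
  assumes "indep_vars (\<lambda>_. borel) X I" "k \<in> I" "l \<in> I" "k \<noteq> l"
  shows "indep_var borel (X k) borel (X l)"
proof -
  have "indep_var (PiM {k} (\<lambda>_. borel)) (\<lambda>\<omega>. restrict (\<lambda>i. X i \<omega>) {k})
          (PiM {l} (\<lambda>_. borel)) (\<lambda>\<omega>. restrict (\<lambda>i. X i \<omega>) {l})"
    by (rule indep_var_restrict[OF assms(1)]) (use assms in auto)
  then have "indep_var borel ((\<lambda>f. f k) \<circ> (\<lambda>\<omega>. restrict (\<lambda>i. X i \<omega>) {k}))
              borel ((\<lambda>f. f l) \<circ> (\<lambda>\<omega>. restrict (\<lambda>i. X i \<omega>) {l}))"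
    by (rule indep_var_compose) measurable
  then show ?thesis by (simp add: comp_def)
qed


theorem lemma3:
  fixes M :: "'m measure"
    and u :: "nat \<Rightarrow> 'm \<Rightarrow> real ^ 'd"
    and \<sigma> a \<theta> :: real and \<tau> :: nat
  assumes "prob_space M"
    and "\<sigma> > 0" and "a > 0" and "0 \<le> \<theta>" and "\<theta> < 1" and "\<tau> \<ge> 1"
    and "prob_space.indep_vars M (\<lambda>_. borel) u {1..\<tau>}"
    and "\<And>k. k \<in> {1..\<tau>} \<Longrightarrow>
           prob_space.indep_vars M (\<lambda>_. borel) (\<lambda>i x. u k x $ i) UNIV"
    and "\<And>k i. k \<in> {1..\<tau>} \<Longrightarrow>
           distributed M lborel (\<lambda>x. u k x $ i) (\<lambda>y. ennreal (normal_density 0 \<sigma> y))"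
  shows "(\<integral>x. (norm (pgf_noise \<theta> (\<lambda>k x. a *\<^sub>R u k x) \<tau> x))\<^sup>2 \<partial>M)
         = ((1 - \<theta>) / (1 + \<theta>) + 2 / (1 + \<theta>) * \<theta> ^ (2 * \<tau> - 1))
           * (\<integral>x. (norm (a *\<^sub>R u 1 x))\<^sup>2 \<partial>M)"
proof -
  interpret P: prob_space M by fact
  obtain n where tn: "\<tau> = Suc n" using assms(6) by (cases \<tau>) auto
  define X where "X k i x = u k x $ i" for k i x
  define m where "m = (\<integral>y. normal_density 0 \<sigma> y * y^2 \<partial>lborel)"
  define c where "c k = a * coef \<theta> \<tau> k" for k
  have D: "distributed M lborel (X k i) (\<lambda>y. ennreal (normal_density 0 \<sigma> y))" if "k \<in> {1..\<tau>}" for k i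
    using assms(9)[OF that] unfolding X_def by simp
  have intX: "integrable M (X k i)" if "k \<in> {1..\<tau>}" for k i
    by (rule distributed_integrable_var[OF D[OF that]]) (simp_all add: integrable_normal_moment_nz_1[OF assms(2)])
  have EX: "(\<integral>x. X k i x \<partial>M) = 0" if "k \<in> {1..\<tau>}" for k i
    using P.normal_distributed_expectation[OF assms(2) D[OF that]] by simp
  have intX2: "integrable M (\<lambda>x. X k i x * X k i x)" if "k \<in> {1..\<tau>}" for k i
  proof -
    have "integrable lborel (\<lambda>y. normal_density 0 \<sigma> y * y^2)"
      using integrable_normal_moment[OF assms(2), of 0 2] by simp
    then have "integrable M (\<lambda>x. (X k i x)^2)"
      using distributed_integrable[OF D[OF that], of "\<lambda>y. y^2"] by simp
    then show ?thesis by (simp add: power2_eq_square)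
  qed
  have EX2: "(\<integral>x. X k i x * X k i x \<partial>M) = m" if "k \<in> {1..\<tau>}" for k i
    using distributed_integral[OF D[OF that], of "\<lambda>y. y^2"] unfolding m_def
    by (simp add: power2_eq_square)
  have indi: "P.indep_vars (\<lambda>_. borel) (\<lambda>k x. X k i x) {1..\<tau>}" for i
    unfolding X_def by (rule P.indep_vars_compose2[OF assms(7)]) simp
  have cross: "integrable M (\<lambda>x. X k i x * X l i x) \<and> (\<integral>x. X k i x * X l i x \<partial>M) = (if k = l then m else 0)"
    if "k \<in> {1..\<tau>}" "l \<in> {1..\<tau>}" for k l i
  proof (cases "k = l")
    case True
    then show ?thesis using intX2[OF that(1)] EX2[OF that(1)] by simp
  next
    case False
    have iv: "P.indep_var borel (X k i) borel (X l i)"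
      using P.indep_pair[OF indi that False] .
    show ?thesis using P.indep_var_lebesgue_integral[OF iv intX[OF that(1)] intX[OF that(2)]]
      P.indep_var_integrable[OF iv intX[OF that(1)] intX[OF that(2)]] EX[OF that(1)] False by simp
  qed
  have Nrepr: "(norm (pgf_noise \<theta> (\<lambda>k x. a *\<^sub>R u k x) \<tau> x))\<^sup>2
      = (\<Sum>i\<in>UNIV. \<Sum>k\<in>{1..\<tau>}. \<Sum>l\<in>{1..\<tau>}. c k * c l * (X k i x * X l i x))" for x
  proof -
    have "(norm (pgf_noise \<theta> (\<lambda>k x. a *\<^sub>R u k x) \<tau> x))\<^sup>2
       = (\<Sum>i\<in>UNIV. (\<Sum>k\<in>{1..\<tau>}. c k * X k i x) * (\<Sum>l\<in>{1..\<tau>}. c l * X l i x))"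
      unfolding power2_norm_eq_inner inner_vec_def tn pgf_repr
      by (simp add: c_def X_def tn)
    then show ?thesis by (simp add: sum_product algebra_simps)
  qed
  have R1: "(\<integral>x. (norm (pgf_noise \<theta> (\<lambda>k x. a *\<^sub>R u k x) \<tau> x))\<^sup>2 \<partial>M)
      = (\<Sum>i\<in>(UNIV::'d set). \<Sum>k\<in>{1..\<tau>}. \<Sum>l\<in>{1..\<tau>}. c k * c l * (if k = l then m else 0))"
  proof -
    have int3: "integrable M (\<lambda>x. c k * c l * (X k i x * X l i x))" if "k \<in> {1..\<tau>}" "l \<in> {1..\<tau>}" for i k l
      using cross[OF that] by simp
    have e3: "(\<integral>x. c k * c l * (X k i x * X l i x) \<partial>M) = c k * c l * (if k = l then m else 0)"
      if "k \<in> {1..\<tau>}" "l \<in> {1..\<tau>}" for i k l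
      using cross[OF that] by simp
    have "(\<integral>x. (\<Sum>i\<in>UNIV. \<Sum>k\<in>{1..\<tau>}. \<Sum>l\<in>{1..\<tau>}. c k * c l * (X k i x * X l i x)) \<partial>M)
      = (\<Sum>i\<in>(UNIV::'d set). (\<integral>x. (\<Sum>k\<in>{1..\<tau>}. \<Sum>l\<in>{1..\<tau>}. c k * c l * (X k i x * X l i x)) \<partial>M))"
      by (rule Bochner_Integration.integral_sum[where f="\<lambda>i x. \<Sum>k\<in>{1..\<tau>}. \<Sum>l\<in>{1..\<tau>}. c k * c l * (X k i x * X l i x)"]) (auto intro!: Bochner_Integration.integrable_sum int3)
    also have "\<dots> = (\<Sum>i\<in>(UNIV::'d set). \<Sum>k\<in>{1..\<tau>}. (\<integral>x. (\<Sum>l\<in>{1..\<tau>}. c k * c l * (X k i x * X l i x)) \<partial>M))"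
      by (intro sum.cong refl Bochner_Integration.integral_sum[where f="\<lambda>k x. \<Sum>l\<in>{1..\<tau>}. c k * c l * (X k i x * X l i x)" for i]) (auto intro!: Bochner_Integration.integrable_sum int3)
    also have "\<dots> = (\<Sum>i\<in>(UNIV::'d set). \<Sum>k\<in>{1..\<tau>}. \<Sum>l\<in>{1..\<tau>}. (\<integral>x. c k * c l * (X k i x * X l i x) \<partial>M))"
      by (intro sum.cong refl Bochner_Integration.integral_sum[where f="\<lambda>l x. c k * c l * (X k i x * X l i x)" for i k] int3) auto
    also have "\<dots> = (\<Sum>i\<in>(UNIV::'d set). \<Sum>k\<in>{1..\<tau>}. \<Sum>l\<in>{1..\<tau>}. c k * c l * (if k = l then m else 0))"
      by (intro sum.cong refl e3) auto
    finally show ?thesis unfolding Nrepr .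
  qed
  also have "\<dots> = real CARD('d) * m * (\<Sum>k\<in>{1..\<tau>}. (c k)^2)"
    by (simp add: if_distrib[of "\<lambda>z. _ * z"] sum.delta' sum_distrib_left power2_eq_square mult_ac cong: if_cong)
  also have "(\<Sum>k\<in>{1..\<tau>}. (c k)^2) = a^2 * F \<theta> \<tau>"
    unfolding c_def power_mult_distrib sum_distrib_left[symmetric] tn coef_sq[OF assms(4)] ..
  finally have L: "(\<integral>x. (norm (pgf_noise \<theta> (\<lambda>k x. a *\<^sub>R u k x) \<tau> x))\<^sup>2 \<partial>M)
     = real CARD('d) * m * (a^2 * F \<theta> \<tau>)" .
  have one: "(1::nat) \<in> {1..\<tau>}" using assms(6) by simp
  have "(\<integral>x. (norm (a *\<^sub>R u 1 x))\<^sup>2 \<partial>M) = (\<integral>x. (\<Sum>i\<in>(UNIV::'d set). a^2 * (X 1 i x * X 1 i x)) \<partial>M)"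
    unfolding power2_norm_eq_inner inner_vec_def X_def by (simp add: power2_eq_square mult_ac)
  also have "\<dots> = real CARD('d) * a^2 * m"
    using intX2[OF one] EX2[OF one] by (simp add: Bochner_Integration.integral_sum Bochner_Integration.integrable_sum)
  finally show ?thesis unfolding L F_def by simp
qed

end
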